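(* Let $(X,\rho)$ be a complete metric space, $\varphi\in C(\mathbb T,X)$ positively Lagrange stable, and $\tau\in\mathbb T$, $\tau>0$. Then $\varphi$ is $S$-asymptotically $\tau$-periodic, i.e. $\lim_{t\to+\infty}\rho(\varphi(t+\tau),\varphi(t))=0$, if and only if every $\psi\in\omega_\varphi$ is $\tau$-periodic ($\psi(t+\tau)=\psi(t)$ for all $t\in\mathbb T$).
   Context: $\mathbb T\in\{\mathbb R,\mathbb Z,\mathbb R_+,\mathbb Z_+\}$. $C(\mathbb T,X)$ carries the compact-open topology (metric $d(\varphi,\psi)=\sup_{L>0}\min\{\max_{|t|\le L}\rho(\varphi(t),\psi(t)),L^{-1}\}$), with shifts $\varphi^h(t)=\varphi(t+h)$. $\varphi$ is positively Lagrange stable if $\{\varphi^h:h\in\mathbb T,h\ge0\}$ is precompact in $C(\mathbb T,X)$. $\omega_\varphi$ is the set of limits in $C(\mathbb T,X)$ of $\varphi^{h_n}$ with $h_n\in\mathbb T$, $h_n\to+\infty$. *)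

theory Defs
  imports "HOL-Analysis.Analysis"
begin

definition time_set :: "real set \<Rightarrow> bool" where
  "time_set T \<longleftrightarrow> T = UNIV \<or> T = \<int> \<or> T = {0..} \<or> T = \<nat>"

definition shift :: "(real \<Rightarrow> 'a) \<Rightarrow> real \<Rightarrow> real \<Rightarrow> 'a" where
  "shift \<phi> h = (\<lambda>t. \<phi> (t + h))"

text \<open>Convergence in C(T,X) with the compact-open topology (equivalently, in the metric d):
  uniform convergence on every bounded piece T \<inter> [-L,L].\<close>
definition co_converges :: "real set \<Rightarrow> (nat \<Rightarrow> real \<Rightarrow> 'a::metric_space) \<Rightarrow> (real \<Rightarrow> 'a) \<Rightarrow> bool" where
  "co_converges T f \<psi> \<longleftrightarrow>
     (\<forall>L>0. \<forall>e>0. \<forall>\<^sub>F n in sequentially. \<forall>t\<in>T. \<bar>t\<bar> \<le> L \<longrightarrow> dist (f n t) (\<psi> t) < e)"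

text \<open>Positive Lagrange stability: phi \<in> C(T,X) and the positive semi-orbit of shifts is
  precompact in C(T,X), i.e. every sequence of shifts has a subsequence converging in C(T,X).\<close>
definition pos_lagrange_stable :: "real set \<Rightarrow> (real \<Rightarrow> 'a::metric_space) \<Rightarrow> bool" where
  "pos_lagrange_stable T \<phi> \<longleftrightarrow> continuous_on T \<phi> \<and>
     (\<forall>h::nat \<Rightarrow> real. (\<forall>n. h n \<in> T \<and> h n \<ge> 0) \<longrightarrow>
        (\<exists>r \<psi>. strict_mono r \<and> continuous_on T \<psi> \<and>
               co_converges T (\<lambda>n. shift \<phi> (h (r n))) \<psi>))"

definition omega_limit :: "real set \<Rightarrow> (real \<Rightarrow> 'a::metric_space) \<Rightarrow> (real \<Rightarrow> 'a) set" where
  "omega_limit T \<phi> = {\<psi>. continuous_on T \<psi> \<and>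
     (\<exists>h::nat \<Rightarrow> real. (\<forall>n. h n \<in> T) \<and> filterlim h at_top sequentially \<and>
        co_converges T (\<lambda>n. shift \<phi> (h n)) \<psi>)}"

definition periodic_on :: "real set \<Rightarrow> real \<Rightarrow> (real \<Rightarrow> 'a) \<Rightarrow> bool" where
  "periodic_on T \<tau> \<psi> \<longleftrightarrow> (\<forall>t\<in>T. \<psi> (t + \<tau>) = \<psi> t)"

definition S_asymp_periodic :: "real set \<Rightarrow> real \<Rightarrow> (real \<Rightarrow> 'a::metric_space) \<Rightarrow> bool" where
  "S_asymp_periodic T \<tau> \<phi> \<longleftrightarrow>
     (\<forall>e>0. \<exists>L. \<forall>t\<in>T. t \<ge> L \<longrightarrow> dist (\<phi> (t + \<tau>)) (\<phi> t) < e)"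

end

theory Submission
  imports Defs
begin

lemma time_set_facts:
  assumes "time_set T"
  shows "0 \<in> T" and "\<And>a b. a \<in> T \<Longrightarrow> b \<in> T \<Longrightarrow> a + b \<in> T"
  using assms unfolding time_set_def by (auto intro: Ints_add Nats_add)

theorem mainTheorem13:
  fixes T :: "real set" and \<phi> :: "real \<Rightarrow> 'a::complete_space" and \<tau> :: real
  assumes "time_set T"
    and "pos_lagrange_stable T \<phi>"
    and "\<tau> \<in> T" and "\<tau> > 0"
  shows "S_asymp_periodic T \<tau> \<phi> \<longleftrightarrow> (\<forall>\<psi>\<in>omega_limit T \<phi>. periodic_on T \<tau> \<psi>)"
proof
  note TF = time_set_facts[OF assms(1)]
  assume S: "S_asymp_periodic T \<tau> \<phi>"
  show "\<forall>\<psi>\<in>omega_limit T \<phi>. periodic_on T \<tau> \<psi>"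
  proof (intro ballI, unfold periodic_on_def, intro ballI)
    fix \<psi> t assume "\<psi> \<in> omega_limit T \<phi>" and t: "t \<in> T"
    then obtain h where hT: "\<forall>n. h n \<in> T" and hl: "filterlim h at_top sequentially"
      and cc: "co_converges T (\<lambda>n. shift \<phi> (h n)) \<psi>"
      unfolding omega_limit_def by blast
    show "\<psi> (t + \<tau>) = \<psi> t"
    proof (rule ccontr)
      assume ne: "\<psi> (t + \<tau>) \<noteq> \<psi> t"
      define e where "e = dist (\<psi> (t + \<tau>)) (\<psi> t) / 3"
      have e: "e > 0" using ne unfolding e_def by simp
      have tt: "t + \<tau> \<in> T" using TF(2)[OF t assms(3)] .
      have ev1: "\<forall>\<^sub>F n in sequentially. \<forall>s\<in>T. \<bar>s\<bar> \<le> \<bar>t\<bar> + \<tau> + 1 \<longrightarrow> dist (\<phi> (s + h n)) (\<psi> s) < e"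
      proof -
        have p: "\<bar>t\<bar> + \<tau> + 1 > 0" using assms(4) by simp
        show ?thesis using cc[unfolded co_converges_def, rule_format, OF p e] by (simp add: shift_def)
      qed
      obtain L0 where L0: "\<forall>s\<in>T. s \<ge> L0 \<longrightarrow> dist (\<phi> (s + \<tau>)) (\<phi> s) < e"
        using S e unfolding S_asymp_periodic_def by blast
      have ev2: "\<forall>\<^sub>F n in sequentially. h n \<ge> L0 - t"
        using hl by (simp add: filterlim_at_top)
      obtain n where n1: "\<forall>s\<in>T. \<bar>s\<bar> \<le> \<bar>t\<bar> + \<tau> + 1 \<longrightarrow> dist (\<phi> (s + h n)) (\<psi> s) < e"
        and n2: "h n \<ge> L0 - t"
      proof -
        from eventually_conj[OF ev1 ev2] obtain N where "\<forall>n\<ge>N. (\<forall>s\<in>T. \<bar>s\<bar> \<le> \<bar>t\<bar> + \<tau> + 1 \<longrightarrow> dist (\<phi> (s + h n)) (\<psi> s) < e) \<and> h n \<ge> L0 - t"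
          unfolding eventually_sequentially by blast
        thus ?thesis using that by blast
      qed
      have a0: "dist (\<phi> (t + \<tau> + h n)) (\<psi> (t + \<tau>)) < e"
        using n1 tt assms(4) by auto
      have a: "dist (\<psi> (t + \<tau>)) (\<phi> (t + h n + \<tau>)) < e"
        using a0 by (simp add: add_ac dist_commute)
      have b: "dist (\<phi> (t + h n)) (\<psi> t) < e"
        using n1 t assms(4) by auto
      have c: "dist (\<phi> (t + h n + \<tau>)) (\<phi> (t + h n)) < e"
        using L0 TF(2)[OF t hT[rule_format]] n2 by auto
      have t1: "dist (\<psi> (t + \<tau>)) (\<psi> t) \<le> dist (\<psi> (t + \<tau>)) (\<phi> (t + h n + \<tau>)) + dist (\<phi> (t + h n + \<tau>)) (\<psi> t)"
        by (rule dist_triangle)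
      have t2: "dist (\<phi> (t + h n + \<tau>)) (\<psi> t) \<le> dist (\<phi> (t + h n + \<tau>)) (\<phi> (t + h n)) + dist (\<phi> (t + h n)) (\<psi> t)"
        by (rule dist_triangle)
      have "dist (\<psi> (t + \<tau>)) (\<psi> t) < 3 * e"
        using a b c t1 t2 by linarith
      thus False unfolding e_def by simp
    qed
  qed
next
  note TF = time_set_facts[OF assms(1)]
  assume P: "\<forall>\<psi>\<in>omega_limit T \<phi>. periodic_on T \<tau> \<psi>"
  show "S_asymp_periodic T \<tau> \<phi>"
  proof (rule ccontr)
    assume "\<not> S_asymp_periodic T \<tau> \<phi>"
    then obtain e where e: "e > 0" and E: "\<forall>L. \<exists>t\<in>T. t \<ge> L \<and> \<not> dist (\<phi> (t + \<tau>)) (\<phi> t) < e"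
      unfolding S_asymp_periodic_def by blast
    have ex: "\<forall>n::nat. \<exists>t. t \<in> T \<and> t \<ge> real n \<and> \<not> dist (\<phi> (t + \<tau>)) (\<phi> t) < e"
      using E by blast
    from choice[OF ex] obtain h where h: "\<forall>n. h n \<in> T \<and> h n \<ge> real n \<and> \<not> dist (\<phi> (h n + \<tau>)) (\<phi> (h n)) < e"
      by blast
    have "\<forall>n. h n \<in> T \<and> h n \<ge> 0" using h by (meson of_nat_0_le_iff order_trans)
    then obtain r \<psi> where r: "strict_mono r" and cont: "continuous_on T \<psi>"
      and cc: "co_converges T (\<lambda>n. shift \<phi> (h (r n))) \<psi>"
      using assms(2) unfolding pos_lagrange_stable_def by blast
    have ge: "real n \<le> h (r n)" for n
      using h[rule_format, of "r n"] seq_suble[OF r, of n] by (meson of_nat_le_iff order_trans)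
    have lim: "filterlim (\<lambda>n. h (r n)) at_top sequentially"
      by (rule filterlim_at_top_mono[OF filterlim_real_sequentially]) (simp add: ge)
    have "\<psi> \<in> omega_limit T \<phi>"
      unfolding omega_limit_def mem_Collect_eq
    proof (intro conjI exI[of _ "\<lambda>n. h (r n)"])
      show "\<forall>n. h (r n) \<in> T" using h by simp
    qed (use cont lim cc in auto)
    hence per: "\<psi> (0 + \<tau>) = \<psi> 0" using P TF(1) unfolding periodic_on_def by blast
    have "e/2 > 0" using e by simp
    hence ev: "\<forall>\<^sub>F n in sequentially. \<forall>s\<in>T. \<bar>s\<bar> \<le> \<tau> \<longrightarrow> dist (\<phi> (s + h (r n))) (\<psi> s) < e/2"
      using cc[unfolded co_converges_def, rule_format, OF assms(4) \<open>e/2 > 0\<close>] by (simp add: shift_def)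
    then obtain n where n: "\<forall>s\<in>T. \<bar>s\<bar> \<le> \<tau> \<longrightarrow> dist (\<phi> (s + h (r n))) (\<psi> s) < e/2"
    proof -
      from ev obtain N where "\<forall>n\<ge>N. \<forall>s\<in>T. \<bar>s\<bar> \<le> \<tau> \<longrightarrow> dist (\<phi> (s + h (r n))) (\<psi> s) < e/2"
        unfolding eventually_sequentially by blast
      thus ?thesis using that by blast
    qed
    have a: "dist (\<phi> (\<tau> + h (r n))) (\<psi> \<tau>) < e/2" using n assms(3,4) by auto
    have b: "dist (\<phi> (0 + h (r n))) (\<psi> 0) < e/2" using n[rule_format, OF TF(1)] assms(4) by simp
    have a': "dist (\<phi> (h (r n) + \<tau>)) (\<psi> \<tau>) < e/2" using a by (simp add: add.commute)
    have b': "dist (\<phi> (h (r n))) (\<psi> \<tau>) < e/2" using b per by (simp add: dist_commute)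
    have "dist (\<phi> (h (r n) + \<tau>)) (\<phi> (h (r n))) \<le> dist (\<phi> (h (r n) + \<tau>)) (\<psi> \<tau>) + dist (\<phi> (h (r n))) (\<psi> \<tau>)"
      by (rule dist_triangle2)
    hence "dist (\<phi> (h (r n) + \<tau>)) (\<phi> (h (r n))) < e" using a' b' by linarith
    thus False using h by blast
  qed
qed

end
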